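(* Fix $n\in\mathbb{N}$. Consider a random problem instance, i.e. a random variable whose value determines a target set $T\subseteq\mathbb{F}_2^n$ (with $\mathbb{F}_2=\{0,1\}$), assumed nonempty. For each instance let $C=\sum_{z\in T}|z\rangle\langle z|$, $X=\sum_{j=1}^n\sigma^x_j$, $|\beta,\gamma\rangle_1=e^{-i\beta X}e^{-i\gamma C}|+\rangle^{\otimes n}$ and $F_1(\beta,\gamma)=\langle\beta,\gamma|_1C|\beta,\gamma\rangle_1$. For $k\in T$ and $0\le d\le n$ let $\#_d(k)=|\{z\in T:d_H(z,k)=d\}|$ ($d_H$ the Hamming distance), $f_n(\beta,d)=(\cos\beta)^{n-d}(-i\sin\beta)^d$, and $$c_k(\beta,\gamma)=\sum_{d=0}^n\left(\#_d(k)(e^{-i\gamma}-1)+\binom{n}{d}\right)f_n(\beta,d).$$ For a function $g$ of $k$, write $\overline{g(k)}=\frac{1}{|T|}\sum_{k\in T}g(k)$ (an instance-dependent random variable). Define $$\tilde E(F_1(\beta,\gamma))=\frac{E(|T|)}{2^n}\,E\!\left(\overline{|c_k(\beta,\gamma)|^2}\right).$$ Then $$E\!\left(\overline{|c_k(\beta,\gamma)|^2}\right)=\sum_{d_1,d_2=0}^n w_{d_1,d_2}(\gamma)\,f_n(\beta,d_1)\,f_n(\beta,d_2)^*,$$ where $$\begin{aligned}w_{d_1,d_2}(\gamma)=\;&E\!\left(\overline{\#_{d_1}(k)\#_{d_2}(k)}\right)(e^{-i\gamma}-1)(e^{i\gamma}-1)+E\!\left(\overline{\#_{d_1}(k)}\right)(e^{-i\gamma}-1)\binom{n}{d_2}\\&+E\!\left(\overline{\#_{d_2}(k)}\right)(e^{i\gamma}-1)\binom{n}{d_1}+\binom{n}{d_1}\binom{n}{d_2},\end{aligned}$$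 and the approximation error satisfies $$\left|E(F_1(\beta,\gamma))-\tilde E(F_1(\beta,\gamma))\right|\le\sqrt{\operatorname{Var}(|T|)\,\operatorname{Var}\!\left(\overline{|c_k(\beta,\gamma)|^2}\right)}.$$
   Context: Expectations $E$, variances $\operatorname{Var}$ are taken over the random instance (hence over the random target set $T$). $|z\rangle$ denotes the computational basis state of $z\in\mathbb{F}_2^n$, $|+\rangle=(|0\rangle+|1\rangle)/\sqrt2$, $\sigma^x_j$ is Pauli-$X$ on qubit $j$, and ${}^*$ denotes complex conjugation. *)

theory Defs
  imports "HOL-Probability.Probability"
begin

text \<open>Computational basis of n qubits: bit strings of length n (elements of F_2^n).
Operators are matrices indexed by bit strings, vectors are functions on bit strings.\<close>

definition bits :: "nat \<Rightarrow> bool list set" where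
  "bits n = {z. length z = n}"

definition hamming :: "bool list \<Rightarrow> bool list \<Rightarrow> nat" where
  "hamming z k = card {j. j < length z \<and> z ! j \<noteq> k ! j}"

type_synonym qop = "bool list \<Rightarrow> bool list \<Rightarrow> complex"
type_synonym qvec = "bool list \<Rightarrow> complex"

definition mat_mult :: "nat \<Rightarrow> qop \<Rightarrow> qop \<Rightarrow> qop" where
  "mat_mult n A B = (\<lambda>z w. \<Sum>y\<in>bits n. A z y * B y w)"

definition id_op :: qop where
  "id_op = (\<lambda>z w. if z = w then 1 else 0)"

definition mat_pow :: "nat \<Rightarrow> qop \<Rightarrow> nat \<Rightarrow> qop" where
  "mat_pow n A m = (mat_mult n A ^^ m) id_op"

definition mexp :: "nat \<Rightarrow> qop \<Rightarrow> qop" where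
  "mexp n A = (\<lambda>z w. \<Sum>m. mat_pow n A m z w / of_nat (fact m))"

definition op_scale :: "complex \<Rightarrow> qop \<Rightarrow> qop" where
  "op_scale c A = (\<lambda>z w. c * A z w)"

definition apply_op :: "nat \<Rightarrow> qop \<Rightarrow> qvec \<Rightarrow> qvec" where
  "apply_op n A v = (\<lambda>z. \<Sum>w\<in>bits n. A z w * v w)"

text \<open>Pauli X on qubit j (0-based): flips bit j.\<close>
definition sigma_x :: "nat \<Rightarrow> qop" where
  "sigma_x j = (\<lambda>z w. if z = w[j := \<not> w ! j] then 1 else 0)"

definition Xop :: "nat \<Rightarrow> qop" where
  "Xop n = (\<lambda>z w. \<Sum>j<n. sigma_x j z w)"

definition Cop :: "bool list set \<Rightarrow> qop" where
  "Cop T = (\<lambda>z w. if z = w \<and> z \<in> T then 1 else 0)"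

definition plus_state :: "nat \<Rightarrow> qvec" where
  "plus_state n = (\<lambda>z. complex_of_real (1 / sqrt (2 ^ n)))"

definition qaoa_state :: "nat \<Rightarrow> bool list set \<Rightarrow> real \<Rightarrow> real \<Rightarrow> qvec" where
  "qaoa_state n T \<beta> \<gamma> =
     apply_op n (mexp n (op_scale (- \<i> * of_real \<beta>) (Xop n)))
       (apply_op n (mexp n (op_scale (- \<i> * of_real \<gamma>) (Cop T))) (plus_state n))"

text \<open>F_1 = <beta,gamma| C |beta,gamma> (a real number since C is Hermitian; we take Re).\<close>
definition F1 :: "nat \<Rightarrow> bool list set \<Rightarrow> real \<Rightarrow> real \<Rightarrow> real" where
  "F1 n T \<beta> \<gamma> = Re (\<Sum>z\<in>bits n. cnj (qaoa_state n T \<beta> \<gamma> z) *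
                       apply_op n (Cop T) (qaoa_state n T \<beta> \<gamma>) z)"

definition num_d :: "bool list set \<Rightarrow> nat \<Rightarrow> bool list \<Rightarrow> nat" where
  "num_d T d k = card {z\<in>T. hamming z k = d}"

definition fn :: "nat \<Rightarrow> real \<Rightarrow> nat \<Rightarrow> complex" where
  "fn n \<beta> d = (of_real (cos \<beta>)) ^ (n - d) * (- \<i> * of_real (sin \<beta>)) ^ d"

definition ck :: "nat \<Rightarrow> bool list set \<Rightarrow> real \<Rightarrow> real \<Rightarrow> bool list \<Rightarrow> complex" where
  "ck n T \<beta> \<gamma> k = (\<Sum>d\<le>n. (of_nat (num_d T d k) * (exp (- \<i> * of_real \<gamma>) - 1)
                              + of_nat (n choose d)) * fn n \<beta> d)"

definition avg :: "bool list set \<Rightarrow> (bool list \<Rightarrow> real) \<Rightarrow> real" where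
  "avg T g = (\<Sum>k\<in>T. g k) / real (card T)"

definition Ex :: "'i measure \<Rightarrow> ('i \<Rightarrow> real) \<Rightarrow> real" where
  "Ex M X = integral\<^sup>L M X"

definition Var :: "'i measure \<Rightarrow> ('i \<Rightarrow> real) \<Rightarrow> real" where
  "Var M X = Ex M (\<lambda>\<omega>. (X \<omega> - Ex M X)\<^sup>2)"

definition wgt :: "'i measure \<Rightarrow> ('i \<Rightarrow> bool list set) \<Rightarrow> nat \<Rightarrow> real \<Rightarrow> nat \<Rightarrow> nat \<Rightarrow> complex" where
  "wgt M T n \<gamma> d1 d2 =
     of_real (Ex M (\<lambda>\<omega>. avg (T \<omega>) (\<lambda>k. real (num_d (T \<omega>) d1 k * num_d (T \<omega>) d2 k))))
       * (exp (- \<i> * of_real \<gamma>) - 1) * (exp (\<i> * of_real \<gamma>) - 1)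
   + of_real (Ex M (\<lambda>\<omega>. avg (T \<omega>) (\<lambda>k. real (num_d (T \<omega>) d1 k))))
       * (exp (- \<i> * of_real \<gamma>) - 1) * of_nat (n choose d2)
   + of_real (Ex M (\<lambda>\<omega>. avg (T \<omega>) (\<lambda>k. real (num_d (T \<omega>) d2 k))))
       * (exp (\<i> * of_real \<gamma>) - 1) * of_nat (n choose d1)
   + of_nat (n choose d1) * of_nat (n choose d2)"

end

theory Submission
  imports Defs
begin

lemma bits_Suc: "bits (Suc n) = (\<lambda>(s,b). s @ [b]) ` (bits n \<times> UNIV)"
proof (rule set_eqI, rule iffI)
  fix x assume "x \<in> bits (Suc n)"
  then have L: "length x = Suc n" by (simp add: bits_def)
  then obtain ys y where xy: "x = ys @ [y]" by (metis length_Suc_conv_rev)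
  then have "length ys = n" using L by simp
  then have "(ys, y) \<in> bits n \<times> UNIV" by (simp add: bits_def)
  then show "x \<in> (\<lambda>(s,b). s @ [b]) ` (bits n \<times> UNIV)" unfolding xy by (rule rev_image_eqI) simp
next
  fix x assume "x \<in> (\<lambda>(s,b). s @ [b]) ` (bits n \<times> UNIV)"
  then show "x \<in> bits (Suc n)" by (force simp: bits_def)
qed

lemma finite_bits[simp]: "finite (bits n)"
proof -
  have "bits n = {xs. set xs \<subseteq> (UNIV::bool set) \<and> length xs = n}" by (auto simp: bits_def)
  then show ?thesis using finite_lists_length_eq[of "UNIV::bool set" n] by simp
qed

lemma sum_bits_prod:
  fixes f :: "nat \<Rightarrow> bool \<Rightarrow> 'a::comm_semiring_1"
  shows "(\<Sum>s\<in>bits n. \<Prod>j<n. f j (s!j)) = (\<Prod>j<n. f j False + f j True)"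
proof (induction n)
  case 0
  then show ?case by (simp add: bits_def)
next
  case (Suc n)
  have inj: "inj_on (\<lambda>(s,b). s @ [b]) (bits n \<times> (UNIV::bool set))"
    by (auto simp: inj_on_def)
  have "(\<Sum>s\<in>bits (Suc n). \<Prod>j<Suc n. f j (s!j))
      = (\<Sum>(s,b)\<in>bits n \<times> UNIV. \<Prod>j<Suc n. f j ((s @ [b])!j))"
    unfolding bits_Suc by (subst sum.reindex[OF inj]) (simp add: case_prod_unfold)
  also have "\<dots> = (\<Sum>(s,b)\<in>bits n \<times> UNIV. (\<Prod>j<n. f j (s!j)) * f n b)"
  proof (rule sum.cong[OF refl], clarify)
    fix s b assume "s \<in> bits n"
    then have l: "length s = n" by (simp add: bits_def)
    have "(\<Prod>j<n. f j ((s @ [b])!j)) = (\<Prod>j<n. f j (s!j))"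
      by (rule prod.cong) (auto simp: l nth_append)
    then show "(\<Prod>j<Suc n. f j ((s @ [b])!j)) = (\<Prod>j<n. f j (s!j)) * f n b"
      by (simp add: l[symmetric])
  qed
  also have "\<dots> = (\<Sum>s\<in>bits n. \<Prod>j<n. f j (s!j)) * (\<Sum>b\<in>UNIV. f n b)"
    by (simp add: sum_product sum.cartesian_product)
  also have "\<dots> = (\<Prod>j<Suc n. f j False + f j True)"
    using Suc by (simp add: UNIV_bool add.commute)
  finally show ?case .
qed

lemma hamming_sym: "length z = length k \<Longrightarrow> hamming z k = hamming k z"
  unfolding hamming_def by (simp add: eq_commute)

lemma hamming_le: "hamming z k \<le> length z"
proof -
  have "{j. j < length z \<and> z ! j \<noteq> k ! j} \<subseteq> {..<length z}" by auto
  then show ?thesis unfolding hamming_def by (metis card_lessThan card_mono finite_lessThan)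
qed

lemma prod_if_hamming:
  fixes a b :: "'a::comm_monoid_mult"
  assumes "length z = n"
  shows "(\<Prod>j<n. if z!j \<noteq> k!j then b else a) = a ^ (n - hamming z k) * b ^ (hamming z k)"
proof -
  have H: "hamming z k = card ({..<n} \<inter> {j. z!j \<noteq> k!j})"
    unfolding hamming_def using assms by (intro arg_cong[where f=card]) auto
  have "card ({..<n} \<inter> - {j. z!j \<noteq> k!j}) = n - card ({..<n} \<inter> {j. z!j \<noteq> k!j})"
  proof -
    have "{..<n} \<inter> - {j. z!j \<noteq> k!j} = {..<n} - ({..<n} \<inter> {j. z!j \<noteq> k!j})" by auto
    then show ?thesis by (simp add: card_Diff_subset)
  qed
  then show ?thesis
    by (simp add: prod.If_cases H mult.commute)
qed

definition chi :: "nat \<Rightarrow> bool list \<Rightarrow> bool list \<Rightarrow> complex" where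
  "chi n s z = (\<Prod>j<n. if s!j \<and> z!j then -1 else 1)"

definition lam :: "nat \<Rightarrow> bool list \<Rightarrow> complex" where
  "lam n s = (\<Sum>j<n. if s!j then -1 else 1)"

lemma chi_flip:
  assumes "j < n" "length z = n"
  shows "chi n s (z[j := \<not> z!j]) = (if s!j then -1 else 1) * chi n s z"
proof -
  have "chi n s (z[j := \<not> z!j]) = (if s!j \<and> \<not> z!j then -1 else 1) * (\<Prod>i\<in>{..<n}-{j}. if s!i \<and> z!i then -1 else 1)"
    unfolding chi_def using assms
    by (subst prod.remove[of _ j]) (auto intro!: prod.cong simp: nth_list_update)
  also have "\<dots> = (if s!j then -1 else 1) * ((if s!j \<and> z!j then -1 else 1) * (\<Prod>i\<in>{..<n}-{j}. if s!i \<and> z!i then -1 else 1))"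
    by auto
  also have "\<dots> = (if s!j then -1 else 1) * chi n s z"
    unfolding chi_def using assms by (subst (2) prod.remove[of _ j]) auto
  finally show ?thesis .
qed

lemma X_eigen:
  assumes z: "z \<in> bits n"
  shows "(\<Sum>y\<in>bits n. Xop n z y * chi n s y) = lam n s * chi n s z"
proof -
  have "(\<Sum>y\<in>bits n. Xop n z y * chi n s y) = (\<Sum>j<n. \<Sum>y\<in>bits n. sigma_x j z y * chi n s y)"
    unfolding Xop_def by (simp add: sum_distrib_right sum.swap[of _ "bits n"])
  also have "\<dots> = (\<Sum>j<n. chi n s (z[j := \<not> z!j]))"
  proof (rule sum.cong[OF refl])
    fix j assume j: "j \<in> {..<n}"
    have L: "length z = n" using z by (simp add: bits_def)
    have "(\<Sum>y\<in>bits n. sigma_x j z y * chi n s y) = (\<Sum>y\<in>bits n. if y = z[j := \<not> z!j] then chi n s y else 0)"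
    proof (rule sum.cong[OF refl])
      fix y assume y: "y \<in> bits n"
      have "(z = y[j := \<not> y!j]) = (y = z[j := \<not> z!j])"
        using y L j by (auto simp: bits_def)
      then show "sigma_x j z y * chi n s y = (if y = z[j := \<not> z!j] then chi n s y else 0)"
        by (simp add: sigma_x_def)
    qed
    also have "\<dots> = chi n s (z[j := \<not> z!j])"
      using L by (subst sum.delta[OF finite_bits]) (simp add: bits_def)
    finally show "(\<Sum>y\<in>bits n. sigma_x j z y * chi n s y) = chi n s (z[j := \<not> z!j])" .
  qed
  also have "\<dots> = (\<Sum>j<n. (if s!j then -1 else 1) * chi n s z)"
    using z by (intro sum.cong refl chi_flip) (auto simp: bits_def)
  also have "\<dots> = lam n s * chi n s z"
    unfolding lam_def by (simp add: sum_distrib_right)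
  finally show ?thesis .
qed

lemma hamming_0:
  assumes "length z = length w"
  shows "hamming z w = 0 \<longleftrightarrow> z = w"
proof -
  have "hamming z w = 0 \<longleftrightarrow> {j. j < length z \<and> z ! j \<noteq> w ! j} = {}"
    unfolding hamming_def by (subst card_0_eq) auto
  also have "\<dots> \<longleftrightarrow> z = w" using assms by (auto simp: list_eq_iff_nth_eq)
  finally show ?thesis .
qed

lemma chi_sum_exp:
  fixes c :: complex
  assumes z: "z \<in> bits n" and w: "w \<in> bits n"
  shows "(\<Sum>s\<in>bits n. chi n s z * chi n s w * exp (c * lam n s))
     = 2^n * ((exp c + exp (-c))/2) ^ (n - hamming z w) * ((exp c - exp (-c))/2) ^ hamming z w"
proof -
  define f where "f j b = (if b \<and> z!j then -1 else 1) * (if b \<and> w!j then -1 else 1) * exp (c * (if b then -1 else 1))" for j b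
  have 1: "chi n s z * chi n s w * exp (c * lam n s) = (\<Prod>j<n. f j (s!j))" for s
    unfolding chi_def lam_def f_def by (simp add: sum_distrib_left exp_sum prod.distrib)
  have 2: "f j False + f j True = 2 * (if z!j \<noteq> w!j then (exp c - exp (-c))/2 else (exp c + exp (-c))/2)" for j
    unfolding f_def by auto
  have "(\<Sum>s\<in>bits n. chi n s z * chi n s w * exp (c * lam n s)) = (\<Prod>j<n. f j False + f j True)"
    unfolding 1 by (rule sum_bits_prod)
  also have "\<dots> = 2^n * (\<Prod>j<n. if z!j \<noteq> w!j then (exp c - exp (-c))/2 else (exp c + exp (-c))/2)"
    unfolding 2 by (simp add: prod.distrib)
  also have "\<dots> = 2^n * ((exp c + exp (-c))/2) ^ (n - hamming z w) * ((exp c - exp (-c))/2) ^ hamming z w"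
    using z by (subst prod_if_hamming) (auto simp: bits_def)
  finally show ?thesis .
qed

lemma chi_orth:
  assumes z: "z \<in> bits n" and w: "w \<in> bits n"
  shows "(\<Sum>s\<in>bits n. chi n s z * chi n s w) / 2^n = id_op z w"
proof -
  have L: "length z = length w" using z w by (simp add: bits_def)
  have "(\<Sum>s\<in>bits n. chi n s z * chi n s w) = (\<Sum>s\<in>bits n. chi n s z * chi n s w * exp (0 * lam n s))"
    by simp
  also have "\<dots> = 2^n * 1 ^ (n - hamming z w) * 0 ^ hamming z w"
    using chi_sum_exp[OF z w, of 0] by simp
  finally show ?thesis using hamming_0[OF L] by (auto simp: id_op_def)
qed

lemma matpow_X:
  assumes z: "z \<in> bits n" and w: "w \<in> bits n"
  shows "mat_pow n (op_scale c (Xop n)) m z w = (\<Sum>s\<in>bits n. chi n s z * chi n s w * (c * lam n s)^m) / 2^n"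
  using z
proof (induction m arbitrary: z)
  case 0
  then show ?case using chi_orth[OF 0 w] by (simp add: mat_pow_def)
next
  case (Suc m)
  have "mat_pow n (op_scale c (Xop n)) (Suc m) z w
      = (\<Sum>y\<in>bits n. c * Xop n z y * ((\<Sum>s\<in>bits n. chi n s y * chi n s w * (c * lam n s)^m) / 2^n))"
    unfolding mat_pow_def mat_mult_def op_scale_def funpow.simps o_apply
    by (intro sum.cong refl arg_cong2[where f="(*)"]) (simp add: Suc.IH[unfolded mat_pow_def mat_mult_def op_scale_def])
  also have "\<dots> = (\<Sum>s\<in>bits n. chi n s w * (c * lam n s)^m * c * (\<Sum>y\<in>bits n. Xop n z y * chi n s y)) / 2^n"
  proof -
    have "(\<Sum>y\<in>bits n. c * Xop n z y * ((\<Sum>s\<in>bits n. chi n s y * chi n s w * (c * lam n s)^m) / 2^n))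
       = (\<Sum>y\<in>bits n. \<Sum>s\<in>bits n. c * Xop n z y * (chi n s y * chi n s w * (c * lam n s)^m)) / 2^n"
      by (simp add: sum_distrib_left sum_divide_distrib)
    also have "\<dots> = (\<Sum>s\<in>bits n. \<Sum>y\<in>bits n. c * Xop n z y * (chi n s y * chi n s w * (c * lam n s)^m)) / 2^n"
      by (subst sum.swap) (rule refl)
    also have "\<dots> = (\<Sum>s\<in>bits n. chi n s w * (c * lam n s)^m * c * (\<Sum>y\<in>bits n. Xop n z y * chi n s y)) / 2^n"
      by (simp add: sum_distrib_left mult_ac)
    finally show ?thesis .
  qed
  also have "\<dots> = (\<Sum>s\<in>bits n. chi n s z * chi n s w * (c * lam n s)^Suc m) / 2^n"
    by (simp add: X_eigen[OF Suc.prems] mult_ac)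
  finally show ?case .
qed

lemma mexp_X:
  assumes z: "z \<in> bits n" and w: "w \<in> bits n"
  shows "mexp n (op_scale c (Xop n)) z w = (\<Sum>s\<in>bits n. chi n s z * chi n s w * exp (c * lam n s)) / 2^n"
proof -
  have "(\<lambda>m. mat_pow n (op_scale c (Xop n)) m z w / of_nat (fact m)) sums
        ((\<Sum>s\<in>bits n. chi n s z * chi n s w * exp (c * lam n s)) / 2^n)"
  proof -
    have e: "(\<lambda>m. (c * lam n s)^m / of_nat (fact m)) sums exp (c * lam n s)" for s
      using exp_converges[of "c * lam n s"] by (simp add: scaleR_conv_of_real divide_inverse mult.commute)
    have "(\<lambda>m. \<Sum>s\<in>bits n. chi n s z * chi n s w * ((c * lam n s)^m / of_nat (fact m)))
          sums (\<Sum>s\<in>bits n. chi n s z * chi n s w * exp (c * lam n s))"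
      by (intro sums_sum sums_mult e)
    then have "(\<lambda>m. (\<Sum>s\<in>bits n. chi n s z * chi n s w * ((c * lam n s)^m / of_nat (fact m))) / 2^n)
          sums ((\<Sum>s\<in>bits n. chi n s z * chi n s w * exp (c * lam n s)) / 2^n)"
      by (rule sums_divide)
    then show ?thesis
      by (simp add: matpow_X[OF z w] sum_divide_distrib mult_ac)
  qed
  then show ?thesis unfolding mexp_def by (simp add: sums_iff)
qed

lemma ch_eq: "(exp (- \<i> * of_real \<beta>) + exp (- (- \<i> * of_real \<beta>))) / 2 = complex_of_real (cos \<beta>)"
  by (simp add: cos_of_real[symmetric] cos_exp_eq add.commute)

lemma sh_eq: "(exp (- \<i> * of_real \<beta>) - exp (- (- \<i> * of_real \<beta>))) / 2 = - \<i> * complex_of_real (sin \<beta>)"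
  by (simp add: sin_of_real[symmetric] sin_exp_eq')

lemma mexp_X_fn:
  assumes z: "z \<in> bits n" and w: "w \<in> bits n"
  shows "mexp n (op_scale (- \<i> * of_real \<beta>) (Xop n)) z w = fn n \<beta> (hamming z w)"
  unfolding mexp_X[OF z w] chi_sum_exp[OF z w] ch_eq sh_eq fn_def by simp

lemma matpow_C:
  assumes z: "z \<in> bits n" and w: "w \<in> bits n"
  shows "mat_pow n (op_scale c (Cop T)) m z w = (if z = w then (if z \<in> T then c else 0) ^ m else 0)"
  using z
proof (induction m arbitrary: z)
  case 0
  then show ?case by (simp add: mat_pow_def id_op_def)
next
  case (Suc m)
  have "mat_pow n (op_scale c (Cop T)) (Suc m) z w
      = (\<Sum>y\<in>bits n. c * Cop T z y * (if y = w then (if y \<in> T then c else 0) ^ m else 0))"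
    unfolding mat_pow_def mat_mult_def op_scale_def funpow.simps o_apply
    by (intro sum.cong refl arg_cong2[where f="(*)"]) (simp add: Suc.IH[unfolded mat_pow_def mat_mult_def op_scale_def])
  also have "\<dots> = (\<Sum>y\<in>bits n. if y = z then c * Cop T z z * (if z = w then (if z \<in> T then c else 0) ^ m else 0) else 0)"
    by (intro sum.cong refl) (auto simp: Cop_def)
  also have "\<dots> = c * Cop T z z * (if z = w then (if z \<in> T then c else 0) ^ m else 0)"
    using Suc.prems by (subst sum.delta[OF finite_bits]) simp
  also have "\<dots> = (if z = w then (if z \<in> T then c else 0) ^ Suc m else 0)"
    by (auto simp: Cop_def)
  finally show ?case .
qed

lemma mexp_C:
  assumes z: "z \<in> bits n" and w: "w \<in> bits n"
  shows "mexp n (op_scale c (Cop T)) z w = (if z = w then (if z \<in> T then exp c else 1) else 0)"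
proof -
  have e: "(\<lambda>m. x^m / of_nat (fact m)) sums exp x" for x :: complex
    using exp_converges[of x] by (simp add: scaleR_conv_of_real divide_inverse mult.commute)
  show ?thesis
  proof (cases "z = w")
    case True
    then show ?thesis unfolding mexp_def matpow_C[OF z w]
      using e[of "if z \<in> T then c else 0"] by (auto simp: sums_iff)
  next
    case False
    then show ?thesis unfolding mexp_def matpow_C[OF z w] by simp
  qed
qed

lemma sum_fn_all:
  assumes k: "k \<in> bits n"
  shows "(\<Sum>w\<in>bits n. fn n \<beta> (hamming k w)) = (\<Sum>d\<le>n. of_nat (n choose d) * fn n \<beta> d)"
proof -
  let ?a = "complex_of_real (cos \<beta>)" and ?b = "- \<i> * complex_of_real (sin \<beta>)"
  have L: "length k = n" using k by (simp add: bits_def)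
  have "(\<Sum>w\<in>bits n. fn n \<beta> (hamming k w)) = (\<Sum>w\<in>bits n. \<Prod>j<n. if k!j \<noteq> w!j then ?b else ?a)"
    unfolding prod_if_hamming[OF L] fn_def by (rule refl)
  also have "\<dots> = (\<Prod>j<n. (\<lambda>j x. if k!j \<noteq> x then ?b else ?a) j False + (\<lambda>j x. if k!j \<noteq> x then ?b else ?a) j True)"
    by (rule sum_bits_prod)
  also have "\<dots> = (\<Prod>j<n. ?b + ?a)"
    by (intro prod.cong refl) auto
  also have "\<dots> = (?b + ?a) ^ n" by simp
  also have "\<dots> = (\<Sum>d\<le>n. of_nat (n choose d) * ?b ^ d * ?a ^ (n - d))"
    by (rule binomial_ring)
  also have "\<dots> = (\<Sum>d\<le>n. of_nat (n choose d) * fn n \<beta> d)"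
    by (simp add: fn_def mult_ac)
  finally show ?thesis .
qed

lemma sum_fn_T:
  assumes k: "k \<in> bits n" and T: "T \<subseteq> bits n"
  shows "(\<Sum>w\<in>T. fn n \<beta> (hamming k w)) = (\<Sum>d\<le>n. of_nat (num_d T d k) * fn n \<beta> d)"
proof -
  have fT: "finite T" by (rule finite_subset[OF T finite_bits])
  have h: "hamming k w = hamming w k" if "w \<in> T" for w
    using that T k by (intro hamming_sym) (auto simp: bits_def)
  have im: "(\<lambda>w. hamming w k) ` T \<subseteq> {..n}"
  proof
    fix d assume "d \<in> (\<lambda>w. hamming w k) ` T"
    then obtain w where "w \<in> T" "d = hamming w k" by blast
    then show "d \<in> {..n}" using T hamming_le[of w k] by (auto simp: bits_def)
  qed
  have "(\<Sum>w\<in>T. fn n \<beta> (hamming k w)) = (\<Sum>w\<in>T. fn n \<beta> (hamming w k))"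
    by (intro sum.cong refl) (simp add: h)
  also have "\<dots> = (\<Sum>d\<le>n. \<Sum>w\<in>{x \<in> T. hamming x k = d}. fn n \<beta> (hamming w k))"
    by (rule sum.group[OF fT finite_atMost im, symmetric])
  also have "\<dots> = (\<Sum>d\<le>n. of_nat (num_d T d k) * fn n \<beta> d)"
    by (intro sum.cong refl) (simp add: num_d_def)
  finally show ?thesis .
qed

lemma phi_eq:
  assumes w: "w \<in> bits n"
  shows "apply_op n (mexp n (op_scale (- \<i> * of_real \<gamma>) (Cop T))) (plus_state n) w
       = (if w \<in> T then exp (- \<i> * of_real \<gamma>) else 1) * complex_of_real (1 / sqrt (2 ^ n))"
proof -
  have "apply_op n (mexp n (op_scale (- \<i> * of_real \<gamma>) (Cop T))) (plus_state n) w
      = (\<Sum>v\<in>bits n. if v = w then (if w \<in> T then exp (- \<i> * of_real \<gamma>) else 1) * complex_of_real (1 / sqrt (2 ^ n)) else 0)"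
    unfolding apply_op_def plus_state_def
    by (intro sum.cong refl) (auto simp: mexp_C[OF w])
  also have "\<dots> = (if w \<in> T then exp (- \<i> * of_real \<gamma>) else 1) * complex_of_real (1 / sqrt (2 ^ n))"
    using w by (subst sum.delta[OF finite_bits]) simp
  finally show ?thesis .
qed

lemma ck_split:
  "ck n T \<beta> \<gamma> k = (exp (- \<i> * of_real \<gamma>) - 1) * (\<Sum>d\<le>n. of_nat (num_d T d k) * fn n \<beta> d)
                   + (\<Sum>d\<le>n. of_nat (n choose d) * fn n \<beta> d)"
  unfolding ck_def by (simp add: ring_distribs sum.distrib sum_distrib_left mult_ac)

lemma state_eq:
  assumes k: "k \<in> bits n" and T: "T \<subseteq> bits n"
  shows "qaoa_state n T \<beta> \<gamma> k = complex_of_real (1 / sqrt (2 ^ n)) * ck n T \<beta> \<gamma> k"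
proof -
  let ?p = "complex_of_real (1 / sqrt (2 ^ n))" and ?e = "exp (- \<i> * of_real \<gamma>)"
  have "qaoa_state n T \<beta> \<gamma> k = (\<Sum>w\<in>bits n. fn n \<beta> (hamming k w) * ((if w \<in> T then ?e else 1) * ?p))"
    unfolding qaoa_state_def apply_op_def[of n "mexp n (op_scale (- \<i> * of_real \<beta>) (Xop n))"]
  proof (intro sum.cong refl)
    fix w assume w: "w \<in> bits n"
    show "mexp n (op_scale (- \<i> * of_real \<beta>) (Xop n)) k w * apply_op n (mexp n (op_scale (- \<i> * of_real \<gamma>) (Cop T))) (plus_state n) w
      = fn n \<beta> (hamming k w) * ((if w \<in> T then ?e else 1) * ?p)"
      unfolding mexp_X_fn[OF k w] phi_eq[OF w] ..
  qed
  also have "\<dots> = ?p * ((\<Sum>w\<in>bits n. fn n \<beta> (hamming k w)) + (?e - 1) * (\<Sum>w\<in>bits n. if w \<in> T then fn n \<beta> (hamming k w) else 0))"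
  proof -
    have "fn n \<beta> (hamming k w) * ((if w \<in> T then ?e else 1) * ?p)
       = ?p * fn n \<beta> (hamming k w) + ?p * (?e - 1) * (if w \<in> T then fn n \<beta> (hamming k w) else 0)" for w
      by (cases "w \<in> T") (simp_all add: algebra_simps diff_divide_distrib)
    then have "(\<Sum>w\<in>bits n. fn n \<beta> (hamming k w) * ((if w \<in> T then ?e else 1) * ?p))
       = (\<Sum>w\<in>bits n. ?p * fn n \<beta> (hamming k w) + ?p * (?e - 1) * (if w \<in> T then fn n \<beta> (hamming k w) else 0))"
      by (intro sum.cong refl)
    also have "\<dots> = ?p * ((\<Sum>w\<in>bits n. fn n \<beta> (hamming k w)) + (?e - 1) * (\<Sum>w\<in>bits n. if w \<in> T then fn n \<beta> (hamming k w) else 0))"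
      by (simp only: sum.distrib sum_distrib_left distrib_left mult.assoc)
    finally show ?thesis .
  qed
  also have "(\<Sum>w\<in>bits n. if w \<in> T then fn n \<beta> (hamming k w) else 0) = (\<Sum>w\<in>T. fn n \<beta> (hamming k w))"
    using T by (simp add: sum.inter_restrict[symmetric] Int_absorb1)
  also have "?p * ((\<Sum>w\<in>bits n. fn n \<beta> (hamming k w)) + (?e - 1) * (\<Sum>w\<in>T. fn n \<beta> (hamming k w)))
      = ?p * ck n T \<beta> \<gamma> k"
    unfolding ck_split sum_fn_all[OF k] sum_fn_T[OF k T] by (simp add: algebra_simps)
  finally show ?thesis .
qed

lemma F1_eq:
  assumes T: "T \<subseteq> bits n"
  shows "F1 n T \<beta> \<gamma> = (\<Sum>k\<in>T. (cmod (ck n T \<beta> \<gamma> k))\<^sup>2) / 2 ^ n"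
proof -
  let ?q = "qaoa_state n T \<beta> \<gamma>"
  have "(\<Sum>z\<in>bits n. cnj (?q z) * apply_op n (Cop T) ?q z)
      = (\<Sum>z\<in>bits n. if z \<in> T then cnj (?q z) * ?q z else 0)"
  proof (intro sum.cong refl)
    fix z assume z: "z \<in> bits n"
    have "apply_op n (Cop T) ?q z = (\<Sum>w\<in>bits n. if w = z then (if z \<in> T then ?q z else 0) else 0)"
      unfolding apply_op_def by (intro sum.cong refl) (auto simp: Cop_def)
    also have "\<dots> = (if z \<in> T then ?q z else 0)" using z by (subst sum.delta[OF finite_bits]) simp
    finally show "cnj (?q z) * apply_op n (Cop T) ?q z = (if z \<in> T then cnj (?q z) * ?q z else 0)" by simp
  qed
  also have "\<dots> = (\<Sum>z\<in>T. cnj (?q z) * ?q z)"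
    using T by (simp add: sum.inter_restrict[symmetric] Int_absorb1)
  also have "\<dots> = (\<Sum>z\<in>T. complex_of_real ((cmod (ck n T \<beta> \<gamma> z))\<^sup>2 / 2 ^ n))"
  proof (intro sum.cong refl)
    fix z assume "z \<in> T"
    then have z: "z \<in> bits n" using T by blast
    have "cnj (?q z) * ?q z = complex_of_real ((cmod (?q z))\<^sup>2)"
      by (subst complex_norm_square) (simp add: mult.commute)
    also have "(cmod (?q z))\<^sup>2 = (cmod (ck n T \<beta> \<gamma> z))\<^sup>2 / 2 ^ n"
    proof -
      have "(cmod (complex_of_real (1 / sqrt (2 ^ n))))\<^sup>2 = 1 / 2 ^ n"
        by (simp only: norm_of_real abs_of_nonneg[OF real_sqrt_ge_zero] power_divide real_sqrt_pow2 zero_le_power zero_le_numeral) (simp add: power_divide)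
      then show ?thesis unfolding state_eq[OF z T] norm_mult power_mult_distrib by simp
    qed
    finally show "cnj (?q z) * ?q z = complex_of_real ((cmod (ck n T \<beta> \<gamma> z))\<^sup>2 / 2 ^ n)" .
  qed
  finally show ?thesis unfolding F1_def by (simp add: sum_divide_distrib)
qed

definition Wp :: "bool list set \<Rightarrow> nat \<Rightarrow> real \<Rightarrow> nat \<Rightarrow> nat \<Rightarrow> complex" where
  "Wp S n \<gamma> d1 d2 =
     of_real (avg S (\<lambda>k. real (num_d S d1 k * num_d S d2 k)))
       * (exp (- \<i> * of_real \<gamma>) - 1) * (exp (\<i> * of_real \<gamma>) - 1)
   + of_real (avg S (\<lambda>k. real (num_d S d1 k)))
       * (exp (- \<i> * of_real \<gamma>) - 1) * of_nat (n choose d2)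
   + of_real (avg S (\<lambda>k. real (num_d S d2 k)))
       * (exp (\<i> * of_real \<gamma>) - 1) * of_nat (n choose d1)
   + of_nat (n choose d1) * of_nat (n choose d2)"

lemma cnj_em: "cnj (exp (- \<i> * of_real \<gamma>) - 1) = exp (\<i> * of_real \<gamma>) - 1"
  by (simp add: exp_cnj)

lemma W_eq:
  assumes fS: "finite S" and ne: "S \<noteq> {}"
  shows "(\<Sum>k\<in>S. (of_nat (num_d S d1 k) * (exp (- \<i> * of_real \<gamma>) - 1) + of_nat (n choose d1))
             * cnj (of_nat (num_d S d2 k) * (exp (- \<i> * of_real \<gamma>) - 1) + of_nat (n choose d2)))
          / of_nat (card S) = Wp S n \<gamma> d1 d2"
proof -
  let ?em = "exp (- \<i> * of_real \<gamma>) - 1" and ?ep = "exp (\<i> * of_real \<gamma>) - 1"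
  let ?c = "(of_nat (card S) :: complex)"
  have c0: "?c \<noteq> 0" using fS ne by simp
  have pw: "(of_nat x1 * e + c1) * cnj (of_nat x2 * e + c2)
      = of_nat (x1 * x2) * e * cnj e + of_nat x1 * e * c2 + of_nat x2 * cnj e * c1 + c1 * c2"
    if "c1 \<in> \<nat>" "c2 \<in> \<nat>" for x1 x2 :: nat and e c1 c2 :: complex
    using that by (auto simp: algebra_simps elim!: Nats_cases)
  have "(\<Sum>k\<in>S. (of_nat (num_d S d1 k) * ?em + of_nat (n choose d1))
             * cnj (of_nat (num_d S d2 k) * ?em + of_nat (n choose d2)))
      = (\<Sum>k\<in>S. of_nat (num_d S d1 k * num_d S d2 k) * ?em * cnj ?em
          + of_nat (num_d S d1 k) * ?em * of_nat (n choose d2)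
          + of_nat (num_d S d2 k) * cnj ?em * of_nat (n choose d1)
          + of_nat (n choose d1) * of_nat (n choose d2))" (is "_ = ?M")
    by (intro sum.cong refl pw) auto
  moreover have "?M = (\<Sum>k\<in>S. of_nat (num_d S d1 k * num_d S d2 k)) * ?em * ?ep
        + (\<Sum>k\<in>S. of_nat (num_d S d1 k)) * ?em * of_nat (n choose d2)
        + (\<Sum>k\<in>S. of_nat (num_d S d2 k)) * ?ep * of_nat (n choose d1)
        + ?c * (of_nat (n choose d1) * of_nat (n choose d2))"
    unfolding cnj_em sum.distrib sum_distrib_right by simp
  moreover have "Wp S n \<gamma> d1 d2 = ((\<Sum>k\<in>S. of_nat (num_d S d1 k * num_d S d2 k)) * ?em * ?ep
        + (\<Sum>k\<in>S. of_nat (num_d S d1 k)) * ?em * of_nat (n choose d2)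
        + (\<Sum>k\<in>S. of_nat (num_d S d2 k)) * ?ep * of_nat (n choose d1)
        + ?c * (of_nat (n choose d1) * of_nat (n choose d2))) / ?c"
    unfolding Wp_def avg_def using c0
    by (simp add: of_real_sum add_divide_distrib field_simps del: of_nat_mult)
  ultimately show ?thesis by simp
qed

lemma pointwise:
  assumes fS: "finite S" and ne: "S \<noteq> {}"
  shows "complex_of_real (avg S (\<lambda>k. (cmod (ck n S \<beta> \<gamma> k))\<^sup>2))
       = (\<Sum>d1\<le>n. \<Sum>d2\<le>n. Wp S n \<gamma> d1 d2 * fn n \<beta> d1 * cnj (fn n \<beta> d2))"
proof -
  define a where "a k d = of_nat (num_d S d k) * (exp (- \<i> * of_real \<gamma>) - 1) + of_nat (n choose d)" for k d
  have ck: "ck n S \<beta> \<gamma> k = (\<Sum>d\<le>n. a k d * fn n \<beta> d)" for k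
    unfolding ck_def a_def ..
  have sq: "complex_of_real ((cmod (ck n S \<beta> \<gamma> k))\<^sup>2)
      = (\<Sum>d1\<le>n. \<Sum>d2\<le>n. a k d1 * cnj (a k d2) * (fn n \<beta> d1 * cnj (fn n \<beta> d2)))" for k
    unfolding complex_norm_square ck cnj_sum sum_product by (simp add: mult_ac)
  have "complex_of_real (avg S (\<lambda>k. (cmod (ck n S \<beta> \<gamma> k))\<^sup>2))
      = (\<Sum>k\<in>S. complex_of_real ((cmod (ck n S \<beta> \<gamma> k))\<^sup>2)) / of_nat (card S)"
    unfolding avg_def by (simp add: of_real_sum)
  also have "\<dots> = (\<Sum>k\<in>S. \<Sum>d1\<le>n. \<Sum>d2\<le>n. a k d1 * cnj (a k d2) * (fn n \<beta> d1 * cnj (fn n \<beta> d2))) / of_nat (card S)"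
    unfolding sq ..
  also have "\<dots> = (\<Sum>d1\<le>n. \<Sum>d2\<le>n. \<Sum>k\<in>S. a k d1 * cnj (a k d2) * (fn n \<beta> d1 * cnj (fn n \<beta> d2))) / of_nat (card S)"
    by (subst sum.swap, subst (2) sum.swap) (rule refl)
  also have "\<dots> = (\<Sum>d1\<le>n. \<Sum>d2\<le>n. ((\<Sum>k\<in>S. a k d1 * cnj (a k d2)) / of_nat (card S)) * (fn n \<beta> d1 * cnj (fn n \<beta> d2)))"
    by (simp add: sum_divide_distrib sum_distrib_right)
  also have "\<dots> = (\<Sum>d1\<le>n. \<Sum>d2\<le>n. Wp S n \<gamma> d1 d2 * fn n \<beta> d1 * cnj (fn n \<beta> d2))"
    unfolding a_def W_eq[OF fS ne] by (simp add: mult_ac)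
  finally show ?thesis .
qed

lemma integ_T:
  fixes g :: "bool list set \<Rightarrow> 'b::{banach,second_countable_topology}"
  assumes "prob_space M" "T \<in> measurable M (count_space UNIV)"
    and "\<And>\<omega>. \<omega> \<in> space M \<Longrightarrow> T \<omega> \<subseteq> bits n"
  shows "integrable M (\<lambda>\<omega>. g (T \<omega>))"
proof -
  interpret prob_space M by fact
  show ?thesis
  proof (rule integrable_const_bound[where B="\<Sum>S\<in>Pow (bits n). norm (g S)"])
    show "AE \<omega> in M. norm (g (T \<omega>)) \<le> (\<Sum>S\<in>Pow (bits n). norm (g S))"
    proof (rule AE_I2)
      fix \<omega> assume "\<omega> \<in> space M"
      then have "T \<omega> \<in> Pow (bits n)" using assms(3) by blast
      then show "norm (g (T \<omega>)) \<le> (\<Sum>S\<in>Pow (bits n). norm (g S))"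
        by (rule member_le_sum) auto
    qed
    show "(\<lambda>\<omega>. g (T \<omega>)) \<in> borel_measurable M"
      by (rule measurable_compose[OF assms(2)]) simp
  qed
qed

lemma cs_T:
  fixes u v :: "bool list set \<Rightarrow> real"
  assumes "prob_space M" "T \<in> measurable M (count_space UNIV)"
    and "\<And>\<omega>. \<omega> \<in> space M \<Longrightarrow> T \<omega> \<subseteq> bits n"
  shows "(integral\<^sup>L M (\<lambda>\<omega>. u (T \<omega>) * v (T \<omega>)))\<^sup>2
     \<le> integral\<^sup>L M (\<lambda>\<omega>. (u (T \<omega>))\<^sup>2) * integral\<^sup>L M (\<lambda>\<omega>. (v (T \<omega>))\<^sup>2)"
proof -
  have I: "integrable M (\<lambda>\<omega>. g (T \<omega>))" for g :: "bool list set \<Rightarrow> real"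
    by (rule integ_T[OF assms])
  define A where "A = integral\<^sup>L M (\<lambda>\<omega>. (u (T \<omega>))\<^sup>2)"
  define B where "B = integral\<^sup>L M (\<lambda>\<omega>. (v (T \<omega>))\<^sup>2)"
  define C where "C = integral\<^sup>L M (\<lambda>\<omega>. u (T \<omega>) * v (T \<omega>))"
  have A0: "A \<ge> 0" unfolding A_def by simp
  have B0: "B \<ge> 0" unfolding B_def by simp
  have quad: "0 \<le> t\<^sup>2 * A + 2 * t * C + B" for t
  proof -
    have "0 \<le> integral\<^sup>L M (\<lambda>\<omega>. (t * u (T \<omega>) + v (T \<omega>))\<^sup>2)" by simp
    also have "\<dots> = integral\<^sup>L M (\<lambda>\<omega>. t\<^sup>2 * (u (T \<omega>))\<^sup>2 + 2 * t * (u (T \<omega>) * v (T \<omega>)) + (v (T \<omega>))\<^sup>2)"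
      by (rule Bochner_Integration.integral_cong[OF refl]) (simp add: power2_sum power_mult_distrib algebra_simps)
    also have "\<dots> = t\<^sup>2 * A + 2 * t * C + B"
      unfolding A_def B_def C_def
      using Bochner_Integration.integral_add[OF I[of "\<lambda>S. t\<^sup>2 * (u S)\<^sup>2 + 2 * t * (u S * v S)"] I[of "\<lambda>S. (v S)\<^sup>2"]]
        Bochner_Integration.integral_add[OF I[of "\<lambda>S. t\<^sup>2 * (u S)\<^sup>2"] I[of "\<lambda>S. 2 * t * (u S * v S)"]]
      by simp
    finally show ?thesis .
  qed
  show ?thesis
  proof (cases "A = 0")
    case True
    have "C = 0"
    proof (rule ccontr)
      assume "C \<noteq> 0"
      have "0 \<le> (-(B+1)/(2*C))\<^sup>2 * A + 2 * (-(B+1)/(2*C)) * C + B" by (rule quad)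
      also have "\<dots> = -1" using True \<open>C \<noteq> 0\<close> by (simp add: field_simps)
      finally show False by simp
    qed
    then show ?thesis using A0 B0 unfolding A_def[symmetric] B_def[symmetric] C_def[symmetric] by simp
  next
    case False
    then have Ap: "A > 0" using A0 by simp
    have "0 \<le> (-C/A)\<^sup>2 * A + 2 * (-C/A) * C + B" by (rule quad)
    also have "\<dots> = B - C\<^sup>2 / A" using Ap by (simp add: field_simps power2_eq_square)
    finally have "C\<^sup>2 / A \<le> B" by simp
    then have "C\<^sup>2 \<le> A * B" using Ap by (simp add: field_simps)
    then show ?thesis unfolding A_def[symmetric] B_def[symmetric] C_def[symmetric] .
  qed
qed

lemma cov_T:
  fixes x y :: "bool list set \<Rightarrow> real"
  assumes "prob_space M" "T \<in> measurable M (count_space UNIV)"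
    and "\<And>\<omega>. \<omega> \<in> space M \<Longrightarrow> T \<omega> \<subseteq> bits n"
  shows "\<bar>Ex M (\<lambda>\<omega>. x (T \<omega>) * y (T \<omega>)) - Ex M (\<lambda>\<omega>. x (T \<omega>)) * Ex M (\<lambda>\<omega>. y (T \<omega>))\<bar>
     \<le> sqrt (Var M (\<lambda>\<omega>. x (T \<omega>)) * Var M (\<lambda>\<omega>. y (T \<omega>)))"
proof -
  interpret prob_space M by fact
  have I: "integrable M (\<lambda>\<omega>. g (T \<omega>))" for g :: "bool list set \<Rightarrow> real"
    by (rule integ_T[OF assms])
  define a where "a = Ex M (\<lambda>\<omega>. x (T \<omega>))"
  define b where "b = Ex M (\<lambda>\<omega>. y (T \<omega>))"
  have "integral\<^sup>L M (\<lambda>\<omega>. (x (T \<omega>) - a) * (y (T \<omega>) - b))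
      = integral\<^sup>L M (\<lambda>\<omega>. (x (T \<omega>) * y (T \<omega>) - b * x (T \<omega>)) - (a * y (T \<omega>) - a * b))"
    by (rule Bochner_Integration.integral_cong[OF refl]) (simp add: algebra_simps)
  also have "\<dots> = (Ex M (\<lambda>\<omega>. x (T \<omega>) * y (T \<omega>)) - b * a) - (a * b - a * b)"
    using Bochner_Integration.integral_diff[OF I[of "\<lambda>S. x S * y S - b * x S"] I[of "\<lambda>S. a * y S - a * b"]]
      Bochner_Integration.integral_diff[OF I[of "\<lambda>S. x S * y S"] I[of "\<lambda>S. b * x S"]]
      Bochner_Integration.integral_diff[OF I[of "\<lambda>S. a * y S"] I[of "\<lambda>S. a * b"]]
    by (simp add: a_def b_def Ex_def prob_space)
  finally have C: "integral\<^sup>L M (\<lambda>\<omega>. (x (T \<omega>) - a) * (y (T \<omega>) - b))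
      = Ex M (\<lambda>\<omega>. x (T \<omega>) * y (T \<omega>)) - a * b" by simp
  have "(Ex M (\<lambda>\<omega>. x (T \<omega>) * y (T \<omega>)) - a * b)\<^sup>2 \<le> Var M (\<lambda>\<omega>. x (T \<omega>)) * Var M (\<lambda>\<omega>. y (T \<omega>))"
    using cs_T[OF assms, of "\<lambda>S. x S - a" "\<lambda>S. y S - b"]
    unfolding C Var_def a_def[symmetric] b_def[symmetric] by (simp add: Ex_def a_def b_def)
  then have "sqrt ((Ex M (\<lambda>\<omega>. x (T \<omega>) * y (T \<omega>)) - a * b)\<^sup>2) \<le> sqrt (Var M (\<lambda>\<omega>. x (T \<omega>)) * Var M (\<lambda>\<omega>. y (T \<omega>)))"
    by (rule real_sqrt_le_mono)
  then show ?thesis unfolding a_def b_def by simp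
qed

lemma lin4:
  fixes f1 f2 f3 :: "'a \<Rightarrow> complex"
  assumes "prob_space M" "integrable M f1" "integrable M f2" "integrable M f3"
  shows "integral\<^sup>L M (\<lambda>\<omega>. f1 \<omega> * k1 + f2 \<omega> * k2 + f3 \<omega> * k3 + k4)
    = integral\<^sup>L M f1 * k1 + integral\<^sup>L M f2 * k2 + integral\<^sup>L M f3 * k3 + k4"
proof -
  interpret prob_space M by fact
  show ?thesis using assms(2-4) by (simp add: prob_space)
qed

lemma lin_sum2:
  fixes f :: "'i \<Rightarrow> 'j \<Rightarrow> 'a \<Rightarrow> complex"
  assumes "\<And>i j. integrable M (f i j)"
  shows "integral\<^sup>L M (\<lambda>\<omega>. \<Sum>i\<in>A. \<Sum>j\<in>B. f i j \<omega> * c i j) = (\<Sum>i\<in>A. \<Sum>j\<in>B. integral\<^sup>L M (f i j) * c i j)"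
  using assms by (simp add: Bochner_Integration.integral_sum)

lemma dle: assumes "0 \<le> (a::real)" "1 \<le> b" shows "a / b \<le> a"
proof -
  have "a * 1 \<le> a * b" using mult_left_mono[OF assms(2) assms(1)] .
  then show ?thesis using assms by (simp add: divide_le_eq)
qed

theorem theorem1:
  fixes M :: "'i measure" and T :: "'i \<Rightarrow> bool list set" and n :: nat and \<beta> \<gamma> :: real
  assumes "prob_space M"
    and "T \<in> measurable M (count_space UNIV)"
    and "\<And>\<omega>. \<omega> \<in> space M \<Longrightarrow> T \<omega> \<noteq> {} \<and> T \<omega> \<subseteq> bits n"
  shows "complex_of_real (Ex M (\<lambda>\<omega>. avg (T \<omega>) (\<lambda>k. (cmod (ck n (T \<omega>) \<beta> \<gamma> k))\<^sup>2)))
           = (\<Sum>d1\<le>n. \<Sum>d2\<le>n. wgt M T n \<gamma> d1 d2 * fn n \<beta> d1 * cnj (fn n \<beta> d2))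
       \<and> \<bar>Ex M (\<lambda>\<omega>. F1 n (T \<omega>) \<beta> \<gamma>)
           - Ex M (\<lambda>\<omega>. real (card (T \<omega>))) / 2 ^ n
             * Ex M (\<lambda>\<omega>. avg (T \<omega>) (\<lambda>k. (cmod (ck n (T \<omega>) \<beta> \<gamma> k))\<^sup>2))\<bar>
         \<le> sqrt (Var M (\<lambda>\<omega>. real (card (T \<omega>)))
                 * Var M (\<lambda>\<omega>. avg (T \<omega>) (\<lambda>k. (cmod (ck n (T \<omega>) \<beta> \<gamma> k))\<^sup>2)))"
proof -
  interpret P: prob_space M by (rule assms(1))
  have sub: "\<And>\<omega>. \<omega> \<in> space M \<Longrightarrow> T \<omega> \<subseteq> bits n" using assms(3) by blast
  have ne: "\<And>\<omega>. \<omega> \<in> space M \<Longrightarrow> T \<omega> \<noteq> {}" using assms(3) by blast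
  have fin: "\<And>\<omega>. \<omega> \<in> space M \<Longrightarrow> finite (T \<omega>)" using sub finite_subset finite_bits by metis
  have IC: "integrable M (\<lambda>\<omega>. g (T \<omega>))" for g :: "bool list set \<Rightarrow> complex"
    by (rule integ_T[OF assms(1,2) sub])
  let ?Y = "\<lambda>S. avg S (\<lambda>k. (cmod (ck n S \<beta> \<gamma> k))\<^sup>2)"
  have W: "integral\<^sup>L M (\<lambda>\<omega>. Wp (T \<omega>) n \<gamma> d1 d2) = wgt M T n \<gamma> d1 d2" for d1 d2
  proof -
    have "integral\<^sup>L M (\<lambda>\<omega>. Wp (T \<omega>) n \<gamma> d1 d2) = integral\<^sup>L M (\<lambda>\<omega>.
        complex_of_real (avg (T \<omega>) (\<lambda>k. real (num_d (T \<omega>) d1 k * num_d (T \<omega>) d2 k)))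
          * ((exp (- \<i> * of_real \<gamma>) - 1) * (exp (\<i> * of_real \<gamma>) - 1))
      + complex_of_real (avg (T \<omega>) (\<lambda>k. real (num_d (T \<omega>) d1 k)))
          * ((exp (- \<i> * of_real \<gamma>) - 1) * of_nat (n choose d2))
      + complex_of_real (avg (T \<omega>) (\<lambda>k. real (num_d (T \<omega>) d2 k)))
          * ((exp (\<i> * of_real \<gamma>) - 1) * of_nat (n choose d1))
      + of_nat (n choose d1) * of_nat (n choose d2))"
      unfolding Wp_def by (simp only: mult.assoc)
    also have "\<dots> = wgt M T n \<gamma> d1 d2"
      unfolding wgt_def Ex_def
      by (subst lin4[OF assms(1) IC IC IC]) (simp add: mult.assoc)
    finally show ?thesis .
  qed
  have part1: "complex_of_real (Ex M (\<lambda>\<omega>. ?Y (T \<omega>)))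
           = (\<Sum>d1\<le>n. \<Sum>d2\<le>n. wgt M T n \<gamma> d1 d2 * fn n \<beta> d1 * cnj (fn n \<beta> d2))"
  proof -
    have "complex_of_real (Ex M (\<lambda>\<omega>. ?Y (T \<omega>))) = integral\<^sup>L M (\<lambda>\<omega>. complex_of_real (?Y (T \<omega>)))"
      by (simp add: Ex_def)
    also have "\<dots> = integral\<^sup>L M (\<lambda>\<omega>. \<Sum>d1\<le>n. \<Sum>d2\<le>n. Wp (T \<omega>) n \<gamma> d1 d2 * (fn n \<beta> d1 * cnj (fn n \<beta> d2)))"
      by (rule Bochner_Integration.integral_cong[OF refl])
         (simp add: pointwise[OF fin ne] mult.assoc)
    also have "\<dots> = (\<Sum>d1\<le>n. \<Sum>d2\<le>n. wgt M T n \<gamma> d1 d2 * (fn n \<beta> d1 * cnj (fn n \<beta> d2)))"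
      by (subst lin_sum2[where f="\<lambda>d1 d2 \<omega>. Wp (T \<omega>) n \<gamma> d1 d2", OF IC]) (simp add: W)
    finally show ?thesis by (simp add: mult.assoc)
  qed
  have F: "F1 n (T \<omega>) \<beta> \<gamma> = real (card (T \<omega>)) * ?Y (T \<omega>) / 2 ^ n" if "\<omega> \<in> space M" for \<omega>
  proof -
    have "card (T \<omega>) \<noteq> 0" using fin[OF that] ne[OF that] by simp
    then show ?thesis unfolding F1_eq[OF sub[OF that]] avg_def by simp
  qed
  have EF: "Ex M (\<lambda>\<omega>. F1 n (T \<omega>) \<beta> \<gamma>) = Ex M (\<lambda>\<omega>. real (card (T \<omega>)) * ?Y (T \<omega>)) / 2 ^ n"
    unfolding Ex_def
    by (subst Bochner_Integration.integral_cong[OF refl F]) simp_all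
  have cov: "\<bar>Ex M (\<lambda>\<omega>. real (card (T \<omega>)) * ?Y (T \<omega>)) - Ex M (\<lambda>\<omega>. real (card (T \<omega>))) * Ex M (\<lambda>\<omega>. ?Y (T \<omega>))\<bar>
     \<le> sqrt (Var M (\<lambda>\<omega>. real (card (T \<omega>))) * Var M (\<lambda>\<omega>. ?Y (T \<omega>)))"
    using cov_T[OF assms(1,2) sub, of "\<lambda>S. real (card S)" ?Y] by simp
  have "\<bar>Ex M (\<lambda>\<omega>. F1 n (T \<omega>) \<beta> \<gamma>) - Ex M (\<lambda>\<omega>. real (card (T \<omega>))) / 2 ^ n * Ex M (\<lambda>\<omega>. ?Y (T \<omega>))\<bar>
      = \<bar>Ex M (\<lambda>\<omega>. real (card (T \<omega>)) * ?Y (T \<omega>)) - Ex M (\<lambda>\<omega>. real (card (T \<omega>))) * Ex M (\<lambda>\<omega>. ?Y (T \<omega>))\<bar> / 2 ^ n"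
    unfolding EF by (simp add: diff_divide_distrib[symmetric])
  also have "\<dots> \<le> \<bar>Ex M (\<lambda>\<omega>. real (card (T \<omega>)) * ?Y (T \<omega>)) - Ex M (\<lambda>\<omega>. real (card (T \<omega>))) * Ex M (\<lambda>\<omega>. ?Y (T \<omega>))\<bar>"
    by (rule dle) simp_all
  also have "\<dots> \<le> sqrt (Var M (\<lambda>\<omega>. real (card (T \<omega>))) * Var M (\<lambda>\<omega>. ?Y (T \<omega>)))" by (rule cov)
  finally show ?thesis using part1 by simp
qed

end
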